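(* Let $N>0$ and $L\in\mathbb{Z}_{\ge2}$. Then $C_{L-1}(N)\le\frac12\ln\frac{L-1}{L\cdot2\pi eN}$.
   Context: $\mathcal{B}^n(y,r)$ is the closed Euclidean ball of radius $r$ centered at $y$. A set $\mathcal{C}\subseteq\mathbb{R}^n$ is an $(N,L-1)$-multiple packing ($(N,L-1)$-list-decodable code) if $|\mathcal{C}\cap\mathcal{B}^n(y,\sqrt{nN})|\le L-1$ for every $y\in\mathbb{R}^n$. Its rate is $R(\mathcal{C})=\limsup_{K\to\infty}\frac1n\ln\frac{|\mathcal{C}\cap K\mathcal{A}|}{\mathrm{vol}(K\mathcal{A})}$, where $\mathcal{A}$ is an arbitrary centrally symmetric connected compact set in $\mathbb{R}^n$ with nonempty interior (e.g. the unit ball). $C_{L-1}(N)=\limsup_{n\to\infty}\sup R(\mathcal{C})$ over all $(N,L-1)$-multiple packings $\mathcal{C}\subseteq\mathbb{R}^n$. *)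

theory Defs
  imports "HOL-Analysis.Analysis"
begin

text \<open>Euclidean n-space R^n, represented as extensional functions on the
index set {..<n} (so that the dimension n can vary inside a formula).\<close>

definition Rn :: "nat \<Rightarrow> (nat \<Rightarrow> real) set" where
  "Rn n = PiE {..<n} (\<lambda>_. UNIV)"

definition lebesgue_n :: "nat \<Rightarrow> (nat \<Rightarrow> real) measure" where
  "lebesgue_n n = PiM {..<n} (\<lambda>_. lborel)"

definition cball_n :: "nat \<Rightarrow> (nat \<Rightarrow> real) \<Rightarrow> real \<Rightarrow> (nat \<Rightarrow> real) set" where
  "cball_n n y r = {x \<in> Rn n. sqrt (\<Sum>i<n. (x i - y i)^2) \<le> r}"

definition multiple_packing :: "nat \<Rightarrow> real \<Rightarrow> nat \<Rightarrow> (nat \<Rightarrow> real) set \<Rightarrow> bool" where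
  "multiple_packing n N L C \<longleftrightarrow> C \<subseteq> Rn n \<and>
     (\<forall>y\<in>Rn n. finite (C \<inter> cball_n n y (sqrt (real n * N))) \<and>
                card (C \<inter> cball_n n y (sqrt (real n * N))) \<le> L - 1)"

text \<open>Rate of a packing, with A the closed unit ball, so K*A = B^n(0,K).
  ln 0 is read as -\<infinity> and an infinite count as +\<infinity>.\<close>

definition log_density :: "nat \<Rightarrow> (nat \<Rightarrow> real) set \<Rightarrow> real \<Rightarrow> ereal" where
  "log_density n C K =
     (let S = C \<inter> cball_n n (\<lambda>_\<in>{..<n}. 0) K in
      if infinite S then \<infinity>
      else if card S = 0 then - \<infinity>
      else ereal ((1 / real n) *
             ln (real (card S) / measure (lebesgue_n n) (cball_n n (\<lambda>_\<in>{..<n}. 0) K))))"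

definition rate :: "nat \<Rightarrow> (nat \<Rightarrow> real) set \<Rightarrow> ereal" where
  "rate n C = Limsup at_top (\<lambda>K::real. log_density n C K)"

definition list_dec_capacity :: "nat \<Rightarrow> real \<Rightarrow> ereal" where
  "list_dec_capacity L N =
     limsup (\<lambda>n. SUP C\<in>{C. multiple_packing n N L C}. rate n C)"

end

theory Submission
  imports Defs "HOL-Real_Asymp.Real_Asymp" "HOL-Library.Ramsey"
begin

lemma space_lebesgue_n: "space (lebesgue_n n) = Rn n"
  by (simp add: lebesgue_n_def Rn_def space_PiM)

lemma sets_lebesgue_n: "sets (lebesgue_n n) = sets (PiM {..<n} (\<lambda>_. lborel))"
  by (simp add: lebesgue_n_def)

lemma cball_n_sets[measurable]: "cball_n n y r \<in> sets (lebesgue_n n)"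
proof -
  have "cball_n n y r = {x \<in> space (PiM {..<n} (\<lambda>_. lborel)). sqrt (\<Sum>i<n. (x i - y i)^2) \<le> r}"
    by (simp add: cball_n_def Rn_def space_PiM)
  also have "\<dots> \<in> sets (PiM {..<n} (\<lambda>_. lborel))" by measurable
  finally show ?thesis by (simp add: lebesgue_n_def)
qed

lemma translate_PiM:
  fixes x :: "nat \<Rightarrow> real"
  shows "distr (PiM {..<n} (\<lambda>_. lborel)) (PiM {..<n} (\<lambda>_. lborel)) (\<lambda>z. \<lambda>i\<in>{..<n}. z i + x i)
     = PiM {..<n} (\<lambda>_. lborel)"
proof -
  interpret product_sigma_finite "\<lambda>_. lborel" by standard
  have mt: "(\<lambda>z. \<lambda>i\<in>{..<n}. z i + x i) \<in> measurable (PiM {..<n} (\<lambda>_. lborel)) (PiM {..<n} (\<lambda>_. lborel))"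
    by measurable
  show ?thesis
  proof (rule PiM_eqI)
    show "sets (distr (PiM {..<n} (\<lambda>_. lborel)) (PiM {..<n} (\<lambda>_. lborel)) (\<lambda>z. \<lambda>i\<in>{..<n}. z i + x i)) = sets (PiM {..<n} (\<lambda>_. lborel))"
      by simp
  next
    fix A :: "nat \<Rightarrow> real set" assume A: "\<And>i. i \<in> {..<n} \<Longrightarrow> A i \<in> sets lborel"
    have pre: "(\<lambda>z. \<lambda>i\<in>{..<n}. z i + x i) -` Pi\<^sub>E {..<n} A \<inter> space (PiM {..<n} (\<lambda>_. lborel))
        = Pi\<^sub>E {..<n} (\<lambda>i. (\<lambda>t. t + x i) -` A i)"
      by (auto simp: space_PiM PiE_def Pi_def extensional_def)
    have e1: "emeasure lborel ((\<lambda>t. t + x i) -` A i) = emeasure lborel (A i)" if "i < n" for i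
    proof -
      have "emeasure lborel (A i) = emeasure (distr lborel borel ((+) (x i))) (A i)"
        by (simp add: lborel_distr_plus)
      also have "\<dots> = emeasure lborel ((+) (x i) -` A i \<inter> space lborel)"
        using A that by (subst emeasure_distr) auto
      moreover have "(\<lambda>t. t + x i) -` A i = (+) (x i) -` A i" by (auto simp: add.commute)
      ultimately show ?thesis by simp
    qed
    have ms: "(\<lambda>t. t + x i) -` A i \<in> sets lborel" if "i < n" for i
    proof -
      have "(\<lambda>t. t + x i) \<in> measurable lborel lborel" by simp
      from measurable_sets[OF this A[of i]] that show ?thesis by simp
    qed
    have "emeasure (distr (PiM {..<n} (\<lambda>_. lborel)) (PiM {..<n} (\<lambda>_. lborel)) (\<lambda>z. \<lambda>i\<in>{..<n}. z i + x i)) (Pi\<^sub>E {..<n} A)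
       = emeasure (PiM {..<n} (\<lambda>_. lborel)) (Pi\<^sub>E {..<n} (\<lambda>i. (\<lambda>t. t + x i) -` A i))"
      using A by (subst emeasure_distr[OF mt]) (auto simp: pre intro!: sets_PiM_I_finite)
    also have "\<dots> = (\<Prod>i<n. emeasure lborel ((\<lambda>t. t + x i) -` A i))"
      using ms by (subst emeasure_PiM) auto
    also have "\<dots> = (\<Prod>i<n. emeasure lborel (A i))"
      using e1 by (intro prod.cong) auto
    finally show "emeasure (distr (PiM {..<n} (\<lambda>_. lborel)) (PiM {..<n} (\<lambda>_. lborel)) (\<lambda>z. \<lambda>i\<in>{..<n}. z i + x i)) (Pi\<^sub>E {..<n} A)
       = (\<Prod>i\<in>{..<n}. emeasure lborel (A i))" by simp
  qed simp
qed

lemma emeasure_cball_n: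
  assumes x: "x \<in> Rn n" and r: "r > 0"
  shows "emeasure (lebesgue_n n) (cball_n n x r) = ennreal (unit_ball_vol (real n) * r ^ n)"
proof -
  let ?P = "PiM {..<n} (\<lambda>_. lborel)"
  let ?t = "\<lambda>z. \<lambda>i\<in>{..<n}. z i + x i"
  have mt: "?t \<in> measurable ?P ?P" by measurable
  have pre: "?t -` cball_n n x r \<inter> space ?P = {f. sqrt (\<Sum>i\<in>{..<n}. (f i)\<^sup>2) \<le> r} \<inter> space ?P"
    by (auto simp: cball_n_def Rn_def space_PiM)
  have "emeasure (lebesgue_n n) (cball_n n x r) = emeasure (distr ?P ?P ?t) (cball_n n x r)"
    by (simp add: translate_PiM lebesgue_n_def)
  also have "\<dots> = emeasure ?P (?t -` cball_n n x r \<inter> space ?P)"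
    using cball_n_sets[of n x r] by (subst emeasure_distr[OF mt]) (auto simp: lebesgue_n_def)
  also have "\<dots> = ennreal (unit_ball_vol (real (card {..<n})) * r ^ card {..<n})"
    unfolding pre by (rule emeasure_cball_aux) (use r in auto)
  finally show ?thesis by simp
qed

lemma ln_fact_upper: "ln (fact k :: real) \<le> (real k + 1) * ln (real k + 1) - real k"
proof (induction k)
  case 0 then show ?case by simp
next
  case (Suc k)
  have q: "1 \<le> (real k + 2) * (ln (real k + 2) - ln (real k + 1))"
  proof -
    have "ln ((real k + 1) / (real k + 2)) \<le> (real k + 1) / (real k + 2) - 1"
      by (rule ln_le_minus_one) auto
    also have "\<dots> = - 1 / (real k + 2)" by (simp add: field_simps)
    finally have "ln (real k + 1) - ln (real k + 2) \<le> - 1 / (real k + 2)"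
      by (simp add: ln_div)
    then show ?thesis by (simp add: field_simps)
  qed
  have "ln (fact (Suc k) :: real) = ln (real k + 1) + ln (fact k)"
    by (simp add: ln_mult add.commute)
  also have "\<dots> \<le> ln (real k + 1) + ((real k + 1) * ln (real k + 1) - real k)"
    using Suc by simp
  also have "\<dots> \<le> (real (Suc k) + 1) * ln (real (Suc k) + 1) - real (Suc k)"
    using q by (simp add: algebra_simps)
  finally show ?case .
qed

lemma pochhammer_half_le: "pochhammer (1/2::real) k \<le> fact k"
proof (induction k)
  case 0 then show ?case by simp
next
  case (Suc k)
  have "pochhammer (1/2::real) (Suc k) = pochhammer (1/2) k * (1/2 + real k)"
    by (simp add: pochhammer_Suc)
  also have "\<dots> \<le> fact k * (real k + 1)"
    using Suc by (intro mult_mono) (auto intro: pochhammer_nonneg)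
  also have "\<dots> = fact (Suc k)" by (simp add: algebra_simps)
  finally show ?case .
qed

lemma ln_ubv_lower: "ln (unit_ball_vol (real n)) \<ge> real (n div 2) * ln pi - ln (fact (n div 2 + 1))"
proof -
  define m where "m = n div 2"
  have f0: "(0::real) < fact (m+1)" by simp
  have "n = 2*m \<or> n = 2*m+1" unfolding m_def by presburger
  then consider "n = 2*m" | "n = 2*m+1" by blast
  then show ?thesis
  proof cases
    case 1
    have "unit_ball_vol (real n) = pi ^ m / fact m" using 1 unit_ball_vol_even by simp
    moreover have "(fact m :: real) \<le> fact (m+1)" by (rule fact_mono) simp
    ultimately have "pi ^ m / fact (m+1) \<le> unit_ball_vol (real n)"
      by (auto intro!: divide_left_mono)
    hence "ln (pi ^ m / fact (m+1)) \<le> ln (unit_ball_vol (real n))"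
      by (subst ln_le_cancel_iff) auto
    then show ?thesis by (simp add: ln_div ln_realpow m_def)
  next
    case 2
    have "unit_ball_vol (real n) = pi ^ m / pochhammer (1/2) (Suc m)"
      using 2 unit_ball_vol_odd'(1)[of m] by simp
    moreover have "pochhammer (1/2::real) (Suc m) \<le> fact (m+1)"
      using pochhammer_half_le[of "Suc m"] by simp
    moreover have "pochhammer (1/2::real) (Suc m) > 0" by (rule pochhammer_pos) simp
    ultimately have "pi ^ m / fact (m+1) \<le> unit_ball_vol (real n)"
      by (auto intro!: divide_left_mono)
    hence "ln (pi ^ m / fact (m+1)) \<le> ln (unit_ball_vol (real n))"
      by (subst ln_le_cancel_iff) auto
    then show ?thesis by (simp add: ln_div ln_realpow m_def)
  qed
qed

lemma asymp_aux:
  "((\<lambda>m::real. ((m * ln pi + m + 1 - (m+2) * ln (m+2)) - ((m+1/2) * (ln 2 + ln pi + 1) - m * ln (2*m))) / m) \<longlongrightarrow> 0) at_top"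
  by real_asymp

lemma ubv_asymp:
  assumes d: "d > 0"
  shows "\<exists>n0. \<forall>n\<ge>n0. ln (unit_ball_vol (real n)) \<ge> (real n / 2) * (ln 2 + ln pi + 1 - ln (real n)) - d * real n"
proof -
  define g where "g = (\<lambda>m::real. ((m * ln pi + m + 1 - (m+2) * ln (m+2)) - ((m+1/2) * (ln 2 + ln pi + 1) - m * ln (2*m))))"
  have "((\<lambda>m::nat. g (real m) / real m) \<longlongrightarrow> 0) sequentially"
    unfolding g_def using filterlim_compose[OF asymp_aux filterlim_real_sequentially] by (simp add: o_def)
  hence "eventually (\<lambda>m::nat. g (real m) / real m > - (2*d)) sequentially"
    using d by (intro order_tendstoD) auto
  then obtain M where M: "\<And>m. m \<ge> M \<Longrightarrow> g (real m) / real m > - (2*d)"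
    by (auto simp: eventually_sequentially)
  have c: "ln 2 + ln pi + 1 > (0::real)"
  proof -
    have "ln 2 > (0::real)" by simp
    moreover have "ln pi > (0::real)" using pi_gt3 by simp
    ultimately show ?thesis by linarith
  qed
  show ?thesis
  proof (intro exI allI impI)
    fix n :: nat assume n: "n \<ge> 2*M + 2"
    define m where "m = n div 2"
    have mM: "m \<ge> M" and m1: "m \<ge> 1" using n unfolding m_def by auto
    have nm: "real n \<ge> 2 * real m" "real n \<le> 2 * real m + 1" unfolding m_def by linarith+
    have gm: "g (real m) \<ge> - (2*d) * real m"
      using M[OF mM] m1 by (simp add: field_simps)
    have l1: "ln (real n) \<ge> ln (2 * real m)" using nm m1 by (subst ln_le_cancel_iff) auto
    have l0: "ln (2 * real m) \<ge> 0" using m1 by simp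
    have "(real n / 2) * (ln 2 + ln pi + 1 - ln (real n)) - d * real n
        = (real n / 2) * (ln 2 + ln pi + 1) - (real n / 2) * ln (real n) - d * real n" by (simp add: algebra_simps)
    also have "\<dots> \<le> (real m + 1/2) * (ln 2 + ln pi + 1) - real m * ln (2 * real m) - 2 * d * real m"
    proof -
      have "(real n / 2) * (ln 2 + ln pi + 1) \<le> (real m + 1/2) * (ln 2 + ln pi + 1)"
        using nm c by (intro mult_right_mono) auto
      moreover have "real m * ln (2 * real m) \<le> (real n / 2) * ln (real n)"
        using nm l1 l0 by (intro mult_mono) auto
      moreover have "2 * d * real m \<le> d * real n" using nm d by simp
      ultimately show ?thesis by linarith
    qed
    also have "\<dots> \<le> real m * ln pi + real m + 1 - (real m + 2) * ln (real m + 2)"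
      using gm unfolding g_def by simp
    also have "\<dots> \<le> real m * ln pi - ln (fact (m + 1))"
      using ln_fact_upper[of "m+1"] by (simp add: algebra_simps)
    also have "\<dots> \<le> ln (unit_ball_vol (real n))"
      using ln_ubv_lower[of n] unfolding m_def .
    finally show "(real n / 2) * (ln 2 + ln pi + 1 - ln (real n)) - d * real n \<le> ln (unit_ball_vol (real n))" .
  qed
qed

definition ip :: "nat \<Rightarrow> (nat \<Rightarrow> real) \<Rightarrow> (nat \<Rightarrow> real) \<Rightarrow> real" where
  "ip n v w = (\<Sum>i<n. v i * w i)"

lemma ip_sym: "ip n v w = ip n w v" by (simp add: ip_def mult.commute)

lemma sq_sum_ip:
  "(\<Sum>i<n. (\<Sum>j\<in>H. u j i)^2) = (\<Sum>j\<in>H. \<Sum>k\<in>H. ip n (u j) (u k))"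
proof -
  have "(\<Sum>i<n. (\<Sum>j\<in>H. u j i)^2) = (\<Sum>i<n. \<Sum>j\<in>H. \<Sum>k\<in>H. u j i * u k i)"
    by (simp add: power2_eq_square sum_product)
  also have "\<dots> = (\<Sum>j\<in>H. \<Sum>k\<in>H. \<Sum>i<n. u j i * u k i)"
    by (subst sum.swap) (subst (2) sum.swap, simp)
  finally show ?thesis by (simp add: ip_def)
qed

lemma cross_sum_ip:
  "(\<Sum>i<n. v i * (\<Sum>j\<in>H. u j i)) = (\<Sum>j\<in>H. ip n v (u j))"
  by (simp add: ip_def sum_distrib_left) (subst sum.swap, simp)

lemma double_sum_split:
  assumes "finite H"
  shows "(\<Sum>j\<in>H. \<Sum>k\<in>H. f j k) = (\<Sum>j\<in>H. f j j) + (\<Sum>j\<in>H. \<Sum>k\<in>H-{j}. f j k)"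
proof -
  have "(\<Sum>k\<in>H. f j k) = f j j + (\<Sum>k\<in>H-{j}. f j k)" if "j \<in> H" for j
    using assms that by (simp add: sum.remove)
  then show ?thesis by (simp add: sum.distrib)
qed

lemma gram_bound:
  assumes fin: "finite H" and diag: "\<And>j. j \<in> H \<Longrightarrow> ip n (u j) (u j) \<le> R"
    and off: "\<And>j k. j \<in> H \<Longrightarrow> k \<in> H \<Longrightarrow> j \<noteq> k \<Longrightarrow> ip n (u j) (u k) \<le> B"
  shows "0 \<le> real (card H) * R + real (card H) * (real (card H) - 1) * B"
proof -
  have "0 \<le> (\<Sum>i<n. (\<Sum>j\<in>H. u j i)^2)" by (intro sum_nonneg) simp
  also have "\<dots> = (\<Sum>j\<in>H. ip n (u j) (u j)) + (\<Sum>j\<in>H. \<Sum>k\<in>H-{j}. ip n (u j) (u k))"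
    by (simp add: sq_sum_ip double_sum_split[OF fin])
  also have "(\<Sum>j\<in>H. ip n (u j) (u j)) \<le> real (card H) * R"
    using sum_bounded_above[of H "\<lambda>j. ip n (u j) (u j)" R] diag by simp
  also have "(\<Sum>j\<in>H. \<Sum>k\<in>H-{j}. ip n (u j) (u k)) \<le> (\<Sum>j\<in>H. (real (card H) - 1) * B)"
  proof (intro sum_mono)
    fix j assume j: "j \<in> H"
    have "(\<Sum>k\<in>H-{j}. ip n (u j) (u k)) \<le> real (card (H-{j})) * B"
      using sum_bounded_above[of "H-{j}" "\<lambda>k. ip n (u j) (u k)" B] off j by auto
    also have "real (card (H-{j})) = real (card H) - 1"
    proof -
      have "card H \<ge> 1" using j fin card_gt_0_iff[of H] by auto
      then show ?thesis using j fin by (simp add: card_Diff_singleton of_nat_diff)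
    qed
    finally show "(\<Sum>k\<in>H-{j}. ip n (u j) (u k)) \<le> (real (card H) - 1) * B" .
  qed
  also have "(\<Sum>j\<in>H. (real (card H) - 1) * B) = real (card H) * (real (card H) - 1) * B" by simp
  finally show ?thesis by simp
qed

lemma centroid_bound:
  assumes fin: "finite H" and l: "l \<in> H" and Lc: "card H = L"
    and diag: "\<And>j. j \<in> H \<Longrightarrow> ip n (u j) (u j) \<le> R"
    and offA: "\<And>j k. j \<in> H \<Longrightarrow> k \<in> H \<Longrightarrow> j \<noteq> k \<Longrightarrow> A \<le> ip n (u j) (u k)"
    and offB: "\<And>j k. j \<in> H \<Longrightarrow> k \<in> H \<Longrightarrow> j \<noteq> k \<Longrightarrow> ip n (u j) (u k) \<le> B"
    and L2: "L \<ge> 2"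
  shows "(\<Sum>i<n. (u l i - (1 / real L) * (\<Sum>j\<in>H. u j i))^2)
          \<le> (real L - 1) / real L * (R - 2 * A + B)"
proof -
  have Lpos: "real L > 0" using L2 by simp
  have cardr: "real (card (H - {j})) = real L - 1" if "j \<in> H" for j
  proof -
    have "card H \<ge> 1" using that fin card_gt_0_iff[of H] by auto
    then show ?thesis using that fin Lc by (simp add: card_Diff_singleton of_nat_diff)
  qed
  define S1 where "S1 = (\<Sum>j\<in>H-{l}. ip n (u l) (u j))"
  define D where "D = (\<Sum>j\<in>H. ip n (u j) (u j))"
  define Of where "Of = (\<Sum>j\<in>H. \<Sum>k\<in>H-{j}. ip n (u j) (u k))"
  have exp: "(\<Sum>i<n. (u l i - (1 / real L) * (\<Sum>j\<in>H. u j i))^2)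
     = ip n (u l) (u l) - 2 / real L * (\<Sum>i<n. u l i * (\<Sum>j\<in>H. u j i))
       + 1 / (real L)^2 * (\<Sum>i<n. (\<Sum>j\<in>H. u j i)^2)"
    by (simp add: ip_def power2_diff sum_subtractf sum.distrib sum_distrib_left power_mult_distrib
        algebra_simps power2_eq_square)
  have e2: "(\<Sum>i<n. u l i * (\<Sum>j\<in>H. u j i)) = ip n (u l) (u l) + S1"
    unfolding cross_sum_ip S1_def using fin l by (simp add: sum.remove)
  have e3: "(\<Sum>i<n. (\<Sum>j\<in>H. u j i)^2) = D + Of"
    unfolding sq_sum_ip D_def Of_def by (rule double_sum_split[OF fin])
  have bS1: "S1 \<ge> (real L - 1) * A"
    using sum_bounded_below[of "H-{l}" A "\<lambda>j. ip n (u l) (u j)"] offA[of l] l cardr[OF l]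
    unfolding S1_def by auto
  have bD: "D \<le> real L * R"
    using sum_bounded_above[of H "\<lambda>j. ip n (u j) (u j)" R] diag Lc unfolding D_def by auto
  have bO: "Of \<le> real L * (real L - 1) * B"
  proof -
    have "Of \<le> (\<Sum>j\<in>H. (real L - 1) * B)" unfolding Of_def
    proof (intro sum_mono)
      fix j assume j: "j \<in> H"
      show "(\<Sum>k\<in>H-{j}. ip n (u j) (u k)) \<le> (real L - 1) * B"
        using sum_bounded_above[of "H-{j}" "\<lambda>k. ip n (u j) (u k)" B] offB j cardr[OF j] by auto
    qed
    also have "\<dots> = real L * (real L - 1) * B" using Lc by simp
    finally show ?thesis .
  qed
  have bll: "ip n (u l) (u l) \<le> R" using diag l by simp
  have "(\<Sum>i<n. (u l i - (1 / real L) * (\<Sum>j\<in>H. u j i))^2)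
     = (1 - 2 / real L) * ip n (u l) (u l) - 2 / real L * S1 + 1 / (real L)^2 * (D + Of)"
    unfolding exp e2 e3 by (simp add: algebra_simps)
  also have "\<dots> \<le> (1 - 2 / real L) * R - 2 / real L * ((real L - 1) * A) + 1 / (real L)^2 * (real L * R + real L * (real L - 1) * B)"
  proof -
    have c1: "1 - 2 / real L \<ge> 0" using L2 by (simp add: field_simps)
    have "(1 - 2 / real L) * ip n (u l) (u l) \<le> (1 - 2 / real L) * R"
      using c1 bll by (rule mult_left_mono[rotated])
    moreover have "2 / real L * ((real L - 1) * A) \<le> 2 / real L * S1"
      using bS1 Lpos by (intro mult_left_mono) auto
    moreover have "1 / (real L)^2 * (D + Of) \<le> 1 / (real L)^2 * (real L * R + real L * (real L - 1) * B)"
      using bD bO by (intro mult_left_mono) auto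
    ultimately show ?thesis by linarith
  qed
  also have "\<dots> = (real L - 1) / real L * (R - 2 * A + B)"
    using Lpos by (simp add: field_simps power2_eq_square)
  finally show ?thesis .
qed

lemma ab_le: "a * b \<le> (a^2 + b^2) / (2::real)"
proof -
  have "0 \<le> (a - b)^2" by simp
  thus ?thesis by (simp add: power2_diff field_simps)
qed

lemma ab_ge: "- ((a^2 + b^2) / (2::real)) \<le> a * b"
proof -
  have "0 \<le> (a + b)^2" by simp
  thus ?thesis by (simp add: power2_sum field_simps)
qed

lemma ip_abs_le:
  assumes "ip n v v \<le> R" "ip n w w \<le> R"
  shows "ip n v w \<le> R" "- R \<le> ip n v w"
proof -
  have "ip n v w \<le> (\<Sum>i<n. ((v i)^2 + (w i)^2) / 2)"
    unfolding ip_def by (intro sum_mono ab_le)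
  also have "\<dots> = (ip n v v + ip n w w) / 2"
    by (simp add: ip_def sum.distrib power2_eq_square sum_divide_distrib[symmetric])
  finally show "ip n v w \<le> R" using assms by simp
  have "(\<Sum>i<n. - (((v i)^2 + (w i)^2) / 2)) \<le> ip n v w"
    unfolding ip_def by (intro sum_mono ab_ge)
  moreover have "(\<Sum>i<n. - (((v i)^2 + (w i)^2) / 2)) = - ((ip n v v + ip n w w) / 2)"
    by (simp add: ip_def sum.distrib power2_eq_square sum_divide_distrib[symmetric] sum_negf)
  moreover have "- R \<le> - ((ip n v v + ip n w w) / 2)" using assms by (simp add: field_simps)
  ultimately show "- R \<le> ip n v w" by linarith
qed

lemma plotkin:
  assumes mp: "multiple_packing n N L C" and L2: "L \<ge> 2" and KL: "K \<ge> L"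
    and eta: "\<eta> > 0" and rho: "\<rho> > 0" and y: "y \<in> Rn n"
    and hrho: "(real L - 1) / real L * (\<rho>^2 * (1 + 1 / (real K - 1) + 2 * \<eta>)) \<le> real n * N"
    and ram: "partn_lst {..<M0} (replicate (nat \<lceil>2 / \<eta>\<rceil> + 1) K) 2"
    and T: "finite T" "T \<subseteq> C \<inter> cball_n n y \<rho>"
  shows "card T < M0"
proof (rule ccontr)
  assume "\<not> card T < M0"
  then obtain T' where T': "T' \<subseteq> T" "card T' = M0" "finite T'"
    by (meson not_less obtain_subset_with_card_n)
  obtain g where g: "bij_betw g {..<M0} T'"
    using ex_bij_betw_nat_finite[OF T'(3)] T'(2) by (auto simp: atLeast0LessThan)
  define mcol where "mcol = nat \<lceil>2 / \<eta>\<rceil> + 1"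
  define u where "u = (\<lambda>j i. g j i - y i)"
  have K2: "K \<ge> 2" using L2 KL by simp
  have gC: "g j \<in> C \<inter> cball_n n y \<rho>" if "j < M0" for j
    using g that T'(1) T(2) by (auto simp: bij_betw_def)
  have diag: "ip n (u j) (u j) \<le> \<rho>^2" if "j < M0" for j
  proof -
    have "sqrt (\<Sum>i<n. (g j i - y i)^2) \<le> \<rho>" using gC[OF that] by (simp add: cball_n_def)
    hence "(\<Sum>i<n. (g j i - y i)^2) \<le> \<rho>^2"
      using rho by (simp add: real_sqrt_le_iff' sum_nonneg)
    then show ?thesis by (simp add: ip_def u_def power2_eq_square)
  qed
  define col where "col = (\<lambda>e. min (mcol - 1) (nat \<lfloor>(ip n (u (Min e)) (u (Max e)) / \<rho>^2 + 1) / \<eta>\<rfloor>))"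
  have colf: "col \<in> nsets {..<M0} 2 \<rightarrow> {..<length (replicate mcol K)}"
    unfolding col_def mcol_def by auto
  from ram colf obtain c where c0: "c < length (replicate mcol K)"
    "monochromatic {..<M0} (replicate mcol K ! c) 2 col c"
    unfolding partn_lst_def mcol_def by blast
  hence c: "c < mcol" "monochromatic {..<M0} K 2 col c" by auto
  then obtain H where H: "H \<in> nsets {..<M0} K" "col ` nsets H 2 \<subseteq> {c}"
    unfolding monochromatic_def by blast
  have Hsub: "H \<subseteq> {..<M0}" and Hfin: "finite H" and Hc: "card H = K"
    using H(1) by (auto simp: nsets_def)
  have bin: "\<rho>^2 * (real c * \<eta> - 1) \<le> ip n (u j) (u k) \<and> ip n (u j) (u k) \<le> \<rho>^2 * (real c * \<eta> - 1) + \<eta> * \<rho>^2"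
    if jk: "j \<in> H" "k \<in> H" "j \<noteq> k" for j k
  proof -
    have "{j, k} \<in> nsets H 2" using jk by simp
    hence ccol: "col {j, k} = c" using H(2) by blast
    have ipsym: "ip n (u (Min {j,k})) (u (Max {j,k})) = ip n (u j) (u k)"
      by (cases "j \<le> k") (auto simp: ip_sym max_def min_def)
    define t where "t = ip n (u j) (u k) / \<rho>^2 + 1"
    have jM: "j < M0" "k < M0" using jk Hsub by auto
    have t0: "0 \<le> t" and t2: "t \<le> 2"
      using ip_abs_le[OF diag[OF jM(1)] diag[OF jM(2)]] rho
      by (auto simp: t_def field_simps)
    have f0: "0 \<le> \<lfloor>t / \<eta>\<rfloor>" using t0 eta by simp
    have "t / \<eta> \<le> 2 / \<eta>" using t2 eta by (simp add: divide_right_mono)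
    hence "\<lfloor>t / \<eta>\<rfloor> \<le> \<lceil>2 / \<eta>\<rceil>" by linarith
    hence fle: "nat \<lfloor>t / \<eta>\<rfloor> \<le> mcol - 1" unfolding mcol_def using f0 by linarith
    have "nat \<lfloor>t / \<eta>\<rfloor> = c" using ccol fle unfolding col_def ipsym t_def[symmetric] by simp
    hence fc: "\<lfloor>t / \<eta>\<rfloor> = int c" using f0 by linarith
    hence "real c \<le> t / \<eta>" "t / \<eta> < real c + 1" by linarith+
    hence "real c * \<eta> \<le> t" "t \<le> real c * \<eta> + \<eta>" using eta by (simp_all add: field_simps)
    then show ?thesis using rho unfolding t_def by (simp add: field_simps)
  qed
  define A where "A = \<rho>^2 * (real c * \<eta> - 1)"
  define B where "B = A + \<eta> * \<rho>^2"
  have dH: "\<And>j. j \<in> H \<Longrightarrow> ip n (u j) (u j) \<le> \<rho>^2"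
    using diag Hsub by (meson lessThan_iff subsetD)
  have bH: "\<And>j k. j \<in> H \<Longrightarrow> k \<in> H \<Longrightarrow> j \<noteq> k \<Longrightarrow> ip n (u j) (u k) \<le> B"
    using bin unfolding B_def A_def by blast
  have aH: "\<And>j k. j \<in> H \<Longrightarrow> k \<in> H \<Longrightarrow> j \<noteq> k \<Longrightarrow> A \<le> ip n (u j) (u k)"
    using bin unfolding A_def by blast
  have gb: "0 \<le> real (card H) * \<rho>^2 + real (card H) * (real (card H) - 1) * B"
    by (rule gram_bound[OF Hfin, of n u "\<rho>^2" B, OF dH bH])
  hence "0 \<le> real K * (\<rho>^2 + (real K - 1) * B)" using Hc by (simp add: algebra_simps)
  hence "0 \<le> \<rho>^2 + (real K - 1) * B" using K2 by (simp add: zero_le_mult_iff)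
  hence Bb: "B \<ge> - (\<rho>^2) / (real K - 1)" using K2 by (simp add: field_simps)
  obtain H' where H': "H' \<subseteq> H" "card H' = L" "finite H'"
    using obtain_subset_with_card_n[of L H] Hc KL by auto
  define cen where "cen = (\<lambda>i\<in>{..<n}. y i + (1 / real L) * (\<Sum>j\<in>H'. u j i))"
  have cenR: "cen \<in> Rn n" by (simp add: cen_def Rn_def)
  have inball: "g l \<in> C \<inter> cball_n n cen (sqrt (real n * N))" if l: "l \<in> H'" for l
  proof -
    have lM: "l < M0" using l H'(1) Hsub by auto
    have gl: "g l \<in> C" "g l \<in> Rn n" using gC[OF lM] by (auto simp: cball_n_def)
    have "(\<Sum>i<n. (g l i - cen i)^2) = (\<Sum>i<n. (u l i - (1 / real L) * (\<Sum>j\<in>H'. u j i))^2)"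
      by (intro sum.cong) (auto simp: cen_def u_def algebra_simps)
    also have "\<dots> \<le> (real L - 1) / real L * (\<rho>^2 - 2 * A + B)"
      by (rule centroid_bound[OF H'(3) l H'(2), of n u "\<rho>^2" A B])
        (use dH aH bH H'(1) L2 in blast)+
    also have "\<dots> \<le> (real L - 1) / real L * (\<rho>^2 * (1 + 1 / (real K - 1) + 2 * \<eta>))"
    proof (intro mult_left_mono)
      have "\<rho>^2 - 2 * A + B = \<rho>^2 - 2 * B + 2 * \<eta> * \<rho>^2 + B" by (simp add: B_def)
      also have "\<dots> = \<rho>^2 - B + 2 * \<eta> * \<rho>^2" by simp
      also have "\<dots> \<le> \<rho>^2 + \<rho>^2 / (real K - 1) + 2 * \<eta> * \<rho>^2" using Bb by simp
      finally show "\<rho>^2 - 2 * A + B \<le> \<rho>^2 * (1 + 1 / (real K - 1) + 2 * \<eta>)"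
        by (simp add: algebra_simps)
    qed (use L2 in auto)
    also have "\<dots> \<le> real n * N" by (rule hrho)
    finally have "sqrt (\<Sum>i<n. (g l i - cen i)^2) \<le> sqrt (real n * N)" by simp
    then show ?thesis using gl by (simp add: cball_n_def)
  qed
  have sub: "g ` H' \<subseteq> C \<inter> cball_n n cen (sqrt (real n * N))" using inball by auto
  have injH: "inj_on g H'" using g H'(1) Hsub by (auto simp: bij_betw_def intro: inj_on_subset)
  have "card (g ` H') = L" using card_image[OF injH] H'(2) by simp
  moreover have "finite (C \<inter> cball_n n cen (sqrt (real n * N)))"
    "card (C \<inter> cball_n n cen (sqrt (real n * N))) \<le> L - 1"
    using mp cenR unfolding multiple_packing_def by auto
  ultimately have "L \<le> L - 1" using card_mono[OF _ sub] by fastforce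
  then show False using L2 by simp
qed

abbreviation zero_n :: "nat \<Rightarrow> nat \<Rightarrow> real" where "zero_n n \<equiv> (\<lambda>_\<in>{..<n}. 0)"

lemma zero_n_Rn: "zero_n n \<in> Rn n" by (simp add: Rn_def)

lemma cball_n_sym: "x \<in> Rn n \<Longrightarrow> z \<in> Rn n \<Longrightarrow> z \<in> cball_n n x r \<longleftrightarrow> x \<in> cball_n n z r"
  by (simp add: cball_n_def power2_commute)

lemma cball_n_tri:
  assumes "z \<in> cball_n n x r" "x \<in> cball_n n (zero_n n) K"
  shows "z \<in> cball_n n (zero_n n) (K + r)"
proof -
  have "L2_set (\<lambda>i. (z i - x i) + x i) {..<n} \<le> L2_set (\<lambda>i. z i - x i) {..<n} + L2_set (\<lambda>i. x i) {..<n}"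
    by (rule L2_set_triangle_ineq)
  moreover have "L2_set (\<lambda>i. z i - x i) {..<n} \<le> r" using assms(1) by (simp add: cball_n_def L2_set_def)
  moreover have "L2_set (\<lambda>i. x i) {..<n} \<le> K" using assms(2) by (simp add: cball_n_def L2_set_def)
  ultimately have "L2_set (\<lambda>i. z i) {..<n} \<le> K + r" by simp
  then show ?thesis using assms(1) by (simp add: cball_n_def L2_set_def)
qed

lemma averaging:
  assumes rho: "\<rho> > 0" and K: "K > 0"
    and loc: "\<And>z. z \<in> Rn n \<Longrightarrow> card (S \<inter> cball_n n z \<rho>) \<le> M"
    and S: "finite S" "S \<subseteq> Rn n \<inter> cball_n n (zero_n n) K"
  shows "real (card S) * \<rho> ^ n \<le> real M * (K + \<rho>) ^ n"
proof -
  let ?P = "lebesgue_n n"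
  have ub: "unit_ball_vol (real n) > 0" by simp
  have "(\<integral>\<^sup>+ z. (\<Sum>x\<in>S. indicator (cball_n n x \<rho>) z) \<partial>?P) = (\<Sum>x\<in>S. emeasure ?P (cball_n n x \<rho>))"
    by (subst nn_integral_sum) auto
  also have "\<dots> = (\<Sum>x\<in>S. ennreal (unit_ball_vol (real n) * \<rho> ^ n))"
    using S by (intro sum.cong refl emeasure_cball_n rho) auto
  also have "\<dots> = ennreal (real (card S) * (unit_ball_vol (real n) * \<rho> ^ n))"
    using rho by (simp add: ennreal_of_nat_eq_real_of_nat ennreal_mult)
  finally have eq1: "(\<integral>\<^sup>+ z. (\<Sum>x\<in>S. indicator (cball_n n x \<rho>) z) \<partial>?P) = ennreal (real (card S) * (unit_ball_vol (real n) * \<rho> ^ n))" .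
  have pw: "(\<Sum>x\<in>S. indicator (cball_n n x \<rho>) z) \<le> (of_nat M * indicator (cball_n n (zero_n n) (K + \<rho>)) z :: ennreal)"
    if z: "z \<in> space ?P" for z
  proof -
    have zR: "z \<in> Rn n" using z by (simp add: space_lebesgue_n)
    have "(\<Sum>x\<in>S. indicator (cball_n n x \<rho>) z :: ennreal) = (\<Sum>x\<in>S. indicator (cball_n n z \<rho>) x)"
      using S zR by (intro sum.cong refl) (auto simp: indicator_def cball_n_sym)
    also have "\<dots> = of_nat (card (S \<inter> cball_n n z \<rho>))"
    proof -
      have "(\<Sum>x\<in>S \<inter> cball_n n z \<rho>. (1::ennreal)) = (\<Sum>x\<in>S. indicator (cball_n n z \<rho>) x)"
        by (subst sum.inter_restrict[OF S(1)]) (simp add: indicator_def of_bool_def)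
      then show ?thesis by simp
    qed
    finally have e: "(\<Sum>x\<in>S. indicator (cball_n n x \<rho>) z :: ennreal) = of_nat (card (S \<inter> cball_n n z \<rho>))" .
    show ?thesis
    proof (cases "z \<in> cball_n n (zero_n n) (K + \<rho>)")
      case True
      then show ?thesis using e loc[OF zR] by simp
    next
      case False
      have "S \<inter> cball_n n z \<rho> = {}"
      proof (rule ccontr)
        assume "S \<inter> cball_n n z \<rho> \<noteq> {}"
        then obtain x where x: "x \<in> S" "x \<in> cball_n n z \<rho>" by auto
        have "z \<in> cball_n n x \<rho>" using x S zR cball_n_sym by blast
        with cball_n_tri[OF this] x S False show False by auto
      qed
      then show ?thesis using e False by simp
    qed
  qed
  have "(\<integral>\<^sup>+ z. (\<Sum>x\<in>S. indicator (cball_n n x \<rho>) z) \<partial>?P) \<le> (\<integral>\<^sup>+ z. of_nat M * indicator (cball_n n (zero_n n) (K + \<rho>)) z \<partial>?P)"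
    by (intro nn_integral_mono pw)
  also have "\<dots> = of_nat M * emeasure ?P (cball_n n (zero_n n) (K + \<rho>))"
    by (subst nn_integral_cmult) auto
  also have "\<dots> = ennreal (real M * (unit_ball_vol (real n) * (K + \<rho>) ^ n))"
    using K rho by (subst emeasure_cball_n) (auto simp: zero_n_Rn ennreal_of_nat_eq_real_of_nat ennreal_mult)
  finally have "ennreal (real (card S) * (unit_ball_vol (real n) * \<rho> ^ n)) \<le> ennreal (real M * (unit_ball_vol (real n) * (K + \<rho>) ^ n))"
    unfolding eq1 .
  hence "real (card S) * (unit_ball_vol (real n) * \<rho> ^ n) \<le> real M * (unit_ball_vol (real n) * (K + \<rho>) ^ n)"
    using K rho by (subst (asm) ennreal_le_iff) auto
  hence "unit_ball_vol (real n) * (real (card S) * \<rho> ^ n) \<le> unit_ball_vol (real n) * (real M * (K + \<rho>) ^ n)"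
    by (simp add: algebra_simps)
  then show ?thesis using ub by simp
qed

lemma measure_ball0:
  assumes "K > 0"
  shows "measure (lebesgue_n n) (cball_n n (zero_n n) K) = unit_ball_vol (real n) * K ^ n"
  using assms by (simp add: measure_def emeasure_cball_n zero_n_Rn)

lemma rate_bound:
  assumes mp: "multiple_packing n N L C" and L2: "L \<ge> 2" and N: "N > 0" and n1: "n \<ge> 1"
    and QL: "Q \<ge> L" and eta: "\<eta> > 0" and th: "\<theta> > 0"
    and hth: "(real L - 1) / real L * (\<theta> * (1 + 1 / (real Q - 1) + 2 * \<eta>)) \<le> 1"
    and ram: "partn_lst {..<M0} (replicate (nat \<lceil>2 / \<eta>\<rceil> + 1) Q) 2"
    and M0: "M0 \<ge> 1"
    and e: "e > 0"
  shows "rate n C \<le> ereal (ln (real M0) / real n - ln (sqrt (\<theta> * real n * N)) - ln (unit_ball_vol (real n)) / real n + e)"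
proof -
  define \<rho> where "\<rho> = sqrt (\<theta> * real n * N)"
  have rho: "\<rho> > 0" using th N n1 by (simp add: \<rho>_def)
  have rho2: "\<rho>^2 = \<theta> * real n * N" using th N by (simp add: \<rho>_def)
  have hrho: "(real L - 1) / real L * (\<rho>^2 * (1 + 1 / (real Q - 1) + 2 * \<eta>)) \<le> real n * N"
  proof -
    have "(real L - 1) / real L * (\<rho>^2 * (1 + 1 / (real Q - 1) + 2 * \<eta>))
        = (real n * N) * ((real L - 1) / real L * (\<theta> * (1 + 1 / (real Q - 1) + 2 * \<eta>)))"
      unfolding rho2 by (simp add: algebra_simps)
    also have "\<dots> \<le> (real n * N) * 1"
      using hth N by (intro mult_left_mono) auto
    finally show ?thesis by simp
  qed
  have loc: "card T < M0" if "finite T" "T \<subseteq> C \<inter> cball_n n z \<rho>" "z \<in> Rn n" for T z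
    by (rule plotkin[OF mp L2 QL eta rho that(3) hrho ram that(1,2)])
  have Cs: "C \<subseteq> Rn n" using mp by (simp add: multiple_packing_def)
  have avg: "real (card S) * \<rho> ^ n \<le> real M0 * (K + \<rho>) ^ n"
    if "K > 0" "finite S" "S \<subseteq> C \<inter> cball_n n (zero_n n) K" for S K
  proof (rule averaging[OF rho that(1)])
    fix z assume z: "z \<in> Rn n"
    have "card (S \<inter> cball_n n z \<rho>) < M0"
      by (rule loc) (use that z in auto)
    then show "card (S \<inter> cball_n n z \<rho>) \<le> M0" by simp
  qed (use that Cs in auto)
  have fin: "finite (C \<inter> cball_n n (zero_n n) K)" if K: "K > 0" for K
  proof (rule ccontr)
    assume inf: "infinite (C \<inter> cball_n n (zero_n n) K)"
    define B where "B = nat \<lceil>real M0 * (K + \<rho>) ^ n / \<rho> ^ n\<rceil> + 1"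
    obtain S where S: "S \<subseteq> C \<inter> cball_n n (zero_n n) K" "finite S" "card S = B"
      using infinite_arbitrarily_large[OF inf] by blast
    have "real (card S) * \<rho> ^ n \<le> real M0 * (K + \<rho>) ^ n" by (rule avg[OF K S(2,1)])
    hence "real (card S) \<le> real M0 * (K + \<rho>) ^ n / \<rho> ^ n" using rho by (simp add: field_simps)
    moreover have "real B > real M0 * (K + \<rho>) ^ n / \<rho> ^ n" unfolding B_def by linarith
    ultimately show False using S(3) by simp
  qed
  have ev: "eventually (\<lambda>K. log_density n C K \<le> ereal (ln (real M0) / real n - ln \<rho> - ln (unit_ball_vol (real n)) / real n + e)) at_top"
  proof (rule eventually_at_top_linorderI[of "\<rho> / e + 1"])
    fix K :: real assume K: "K \<ge> \<rho> / e + 1"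
    have Kp: "K > 0" using K rho e by (smt (verit) divide_pos_pos)
    define S where "S = C \<inter> cball_n n (zero_n n) K"
    have Sf: "finite S" using fin[OF Kp] by (simp add: S_def)
    show "log_density n C K \<le> ereal (ln (real M0) / real n - ln \<rho> - ln (unit_ball_vol (real n)) / real n + e)"
    proof (cases "card S = 0")
      case True
      then show ?thesis using Sf unfolding log_density_def Let_def S_def[symmetric] by simp
    next
      case False
      define V where "V = unit_ball_vol (real n) * K ^ n"
      have ub: "unit_ball_vol (real n) > 0" by simp
      have Vp: "V > 0" using Kp ub by (simp add: V_def)
      have ld: "log_density n C K = ereal ((1 / real n) * ln (real (card S) / V))"
        using Sf False Kp unfolding log_density_def Let_def S_def[symmetric]
        by (simp add: measure_ball0 V_def)
      have cS: "real (card S) * \<rho> ^ n \<le> real M0 * (K + \<rho>) ^ n"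
        by (rule avg[OF Kp Sf]) (simp add: S_def)
      have cpos: "real (card S) > 0" using False by simp
      have "ln (real (card S) / V) = ln (real (card S)) - ln V" using cpos Vp by (simp add: ln_div)
      also have "ln (real (card S)) \<le> ln (real M0 * (K + \<rho>) ^ n / \<rho> ^ n)"
        using cS cpos rho M0 Kp by (subst ln_le_cancel_iff) (auto simp: field_simps)
      also have "ln (real M0 * (K + \<rho>) ^ n / \<rho> ^ n) = ln (real M0) + real n * ln (K + \<rho>) - real n * ln \<rho>"
        using M0 rho Kp by (simp add: ln_div ln_mult ln_realpow)
      also have "ln V = ln (unit_ball_vol (real n)) + real n * ln K"
        using ub Kp by (simp add: V_def ln_mult ln_realpow ub[THEN less_imp_neq, THEN not_sym])
      finally have l1: "ln (real (card S) / V) \<le> ln (real M0) - real n * ln \<rho> - ln (unit_ball_vol (real n)) + real n * (ln (K + \<rho>) - ln K)"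
        by (simp add: algebra_simps)
      have "1 + \<rho> / K = (K + \<rho>) / K" using Kp by (simp add: field_simps)
      hence "ln (K + \<rho>) - ln K = ln (1 + \<rho> / K)"
        using Kp rho by (simp add: ln_div)
      also have "\<dots> \<le> \<rho> / K" using rho Kp by (intro ln_add_one_self_le_self) simp
      also have "\<rho> / K \<le> e"
      proof -
        have "\<rho> \<le> e * K" using K e by (simp add: field_simps)
        then show ?thesis using Kp by (simp add: field_simps)
      qed
      finally have l2: "ln (K + \<rho>) - ln K \<le> e" .
      have "(1 / real n) * ln (real (card S) / V) \<le> (1 / real n) * (ln (real M0) - real n * ln \<rho> - ln (unit_ball_vol (real n)) + real n * e)"
        using l1 l2 n1 by (intro mult_left_mono) (auto intro: order.trans[OF _ add_left_mono[OF mult_left_mono]])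
      also have "\<dots> = ln (real M0) / real n - ln \<rho> - ln (unit_ball_vol (real n)) / real n + e"
        using n1 by (simp add: field_simps)
      finally show ?thesis unfolding ld by simp
    qed
  qed
  show ?thesis unfolding rate_def \<rho>_def[symmetric] by (rule Limsup_bounded[OF ev])
qed

lemma lin_aux1: "a \<le> (x - 1) / 2 \<Longrightarrow> b = (x - 1) / 2 \<Longrightarrow> 1 + a + b \<le> (x::real)"
  by (simp add: field_simps)

lemma lin_aux2:
  fixes m s u c lL lL1 ln lN e :: real
  assumes "m \<le> e / 4" "- u \<le> - ((c - ln) / 2) + e / 4" "s = (lL - lL1 - e / 4 + ln + lN) / 2" "e > 0"
  shows "m - s - u + e / 4 \<le> (lL1 - lL - c - lN) / 2 + e"
  using assms by (simp add: field_simps)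

theorem mainTheorem17:
  fixes N :: real and L :: nat
  assumes "N > 0" and "L \<ge> 2"
  shows "list_dec_capacity L N \<le>
           ereal (1/2 * ln ((real L - 1) / (real L * 2 * pi * exp 1 * N)))"
proof -
  note N = assms(1) and L2 = assms(2)
  define T0 where "T0 = 1/2 * ln ((real L - 1) / (real L * 2 * pi * exp 1 * N))"
  have Lr: "real L \<ge> 2" using L2 by simp
  have T0eq: "T0 = (ln (real L - 1) - ln (real L) - ln 2 - ln pi - 1 - ln N) / 2"
  proof -
    have "ln (real L * 2 * pi * exp 1 * N) = ln (real L) + ln 2 + ln pi + 1 + ln N"
      using Lr N pi_gt_zero by (simp add: ln_mult)
    moreover have "ln ((real L - 1) / (real L * 2 * pi * exp 1 * N)) = ln (real L - 1) - ln (real L * 2 * pi * exp 1 * N)"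
      using Lr N pi_gt_zero by (subst ln_div) auto
    ultimately show ?thesis unfolding T0_def by simp
  qed
  show ?thesis unfolding T0_def[symmetric]
  proof (rule ereal_le_epsilon2)
    fix e :: real assume e: "e > 0"
    define \<epsilon> where "\<epsilon> = e / 4"
    have ep: "\<epsilon> > 0" using e by (simp add: \<epsilon>_def)
    have ex1: "exp \<epsilon> - 1 > 0" using ep by simp
    define \<theta> where "\<theta> = real L / (real L - 1) * exp (- \<epsilon>)"
    define \<eta> where "\<eta> = (exp \<epsilon> - 1) / 4"
    define Q where "Q = max L (nat \<lceil>2 / (exp \<epsilon> - 1)\<rceil> + 1)"
    have th: "\<theta> > 0" using Lr by (simp add: \<theta>_def)
    have eta: "\<eta> > 0" using ex1 by (simp add: \<eta>_def)
    have QL: "Q \<ge> L" by (simp add: Q_def)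
    obtain M0' :: nat where ram0: "partn_lst {..<M0'} (replicate (nat \<lceil>2 / \<eta>\<rceil> + 1) Q) 2"
      using ramsey_full[of "replicate (nat \<lceil>2 / \<eta>\<rceil> + 1) Q" 2] by blast
    define M0 where "M0 = M0' + 1"
    have ram: "partn_lst {..<M0} (replicate (nat \<lceil>2 / \<eta>\<rceil> + 1) Q) 2"
      using partn_lst_greater_resource[OF ram0] by (simp add: M0_def)
    have M0: "M0 \<ge> 1" by (simp add: M0_def)
    have hth: "(real L - 1) / real L * (\<theta> * (1 + 1 / (real Q - 1) + 2 * \<eta>)) \<le> 1"
    proof -
      have Qg: "real Q - 1 \<ge> 2 / (exp \<epsilon> - 1)" unfolding Q_def by linarith
      have Qp: "real Q - 1 > 0" using Qg ex1 by (smt (verit) divide_pos_pos)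
      have "2 \<le> (real Q - 1) * (exp \<epsilon> - 1)" using Qg ex1 by (simp add: field_simps)
      hence "1 / (real Q - 1) \<le> (exp \<epsilon> - 1) / 2" using Qp by (simp add: field_simps)
      moreover have "2 * \<eta> = (exp \<epsilon> - 1) / 2" by (simp add: \<eta>_def)
      ultimately have q: "1 + 1 / (real Q - 1) + 2 * \<eta> \<le> exp \<epsilon>" by (rule lin_aux1)
      have "(real L - 1) / real L * \<theta> = exp (- \<epsilon>)" using Lr by (simp add: \<theta>_def)
      hence "(real L - 1) / real L * (\<theta> * (1 + 1 / (real Q - 1) + 2 * \<eta>)) = exp (- \<epsilon>) * (1 + 1 / (real Q - 1) + 2 * \<eta>)"
        by (metis (no_types) mult.assoc)
      also have "\<dots> \<le> exp (- \<epsilon>) * exp \<epsilon>" using q by (intro mult_left_mono) auto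
      also have "\<dots> = 1" by (simp add: exp_minus field_simps)
      finally show ?thesis .
    qed
    obtain n0 where n0: "\<And>n. n \<ge> n0 \<Longrightarrow> ln (unit_ball_vol (real n)) \<ge> (real n / 2) * (ln 2 + ln pi + 1 - ln (real n)) - \<epsilon> * real n"
      using ubv_asymp[OF ep] by blast
    define n1 where "n1 = max (max n0 1) (nat \<lceil>ln (real M0) / \<epsilon>\<rceil>)"
    have ev: "eventually (\<lambda>n. (SUP C\<in>{C. multiple_packing n N L C}. rate n C) \<le> ereal (T0 + e)) sequentially"
    proof (rule eventually_sequentiallyI[of n1])
      fix n assume n: "n \<ge> n1"
      have nn0: "n \<ge> n0" and nge1: "n \<ge> 1" using n by (auto simp: n1_def)
      have np: "real n > 0" using nge1 by simp
      have lnM: "ln (real M0) / real n \<le> \<epsilon>"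
      proof -
        have "ln (real M0) / \<epsilon> \<le> real n" using n unfolding n1_def by linarith
        hence "ln (real M0) \<le> \<epsilon> * real n" using ep by (simp add: field_simps)
        then show ?thesis using np by (simp add: field_simps)
      qed
      have lub: "- (ln (unit_ball_vol (real n)) / real n) \<le> - ((ln 2 + ln pi + 1 - ln (real n)) / 2) + \<epsilon>"
      proof -
        have "ln (unit_ball_vol (real n)) / real n \<ge> ((real n / 2) * (ln 2 + ln pi + 1 - ln (real n)) - \<epsilon> * real n) / real n"
          using n0[OF nn0] np by (intro divide_right_mono) auto
        also have "((real n / 2) * (ln 2 + ln pi + 1 - ln (real n)) - \<epsilon> * real n) / real n = (ln 2 + ln pi + 1 - ln (real n)) / 2 - \<epsilon>"
          using np by (simp add: field_simps)
        finally show ?thesis by simp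
      qed
      have lrho: "ln (sqrt (\<theta> * real n * N)) = (ln (real L) - ln (real L - 1) - \<epsilon> + ln (real n) + ln N) / 2"
      proof -
        have "ln \<theta> = ln (real L) - ln (real L - 1) - \<epsilon>"
          using Lr by (simp add: \<theta>_def ln_mult ln_div)
        moreover have "ln (\<theta> * real n * N) = ln \<theta> + ln (real n) + ln N"
          using th np N by (simp add: ln_mult)
        ultimately show ?thesis using th np N by (simp add: ln_sqrt)
      qed
      have real_ineq: "ln (real M0) / real n - ln (sqrt (\<theta> * real n * N)) - ln (unit_ball_vol (real n)) / real n + \<epsilon> \<le> T0 + e"
        using lin_aux2[OF lnM[unfolded \<epsilon>_def] lub[unfolded \<epsilon>_def] lrho[unfolded \<epsilon>_def] e] unfolding T0eq \<epsilon>_def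
        by (simp add: algebra_simps)
      show "(SUP C\<in>{C. multiple_packing n N L C}. rate n C) \<le> ereal (T0 + e)"
      proof (rule SUP_least)
        fix C assume "C \<in> {C. multiple_packing n N L C}"
        hence mp: "multiple_packing n N L C" by simp
        have "rate n C \<le> ereal (ln (real M0) / real n - ln (sqrt (\<theta> * real n * N)) - ln (unit_ball_vol (real n)) / real n + \<epsilon>)"
          by (rule rate_bound[OF mp L2 N nge1 QL eta th hth ram M0 ep])
        also have "\<dots> \<le> ereal (T0 + e)" using real_ineq by simp
        finally show "rate n C \<le> ereal (T0 + e)" .
      qed
    qed
    have "list_dec_capacity L N \<le> ereal (T0 + e)"
      unfolding list_dec_capacity_def by (rule Limsup_bounded[OF ev])
    then show "list_dec_capacity L N \<le> ereal T0 + ereal e" by simp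
  qed
qed

end
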